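(* In the setting described in the context with all transition matrices symmetric (so all canonical tuples are real), fix $r$ and $k$, fix $\Lambda_{r}^{(d)}$ and all columns of $U_{r}^{(d)}\in\mathbb{R}^{m\times n}$ except the $k$-th. Let $[U_r^{(d)}]_{-k}\in\mathbb{R}^{m\times(n-1)}$ be $U_r^{(d)}$ with its $k$-th column removed, and let $W\in\mathbb{R}^{m\times(m-n+1)}$ have orthonormal columns spanning the orthogonal complement of the column space of $[U_r^{(d)}]_{-k}$. If $u\in\mathbb{R}^{m-n+1}$ is a unit eigenvector of $W^{\mathrm T}S_{r,k}W$ for its smallest eigenvalue, then $Wu$ is an optimal choice of the $k$-th column $[U_r^{(d)}]_k$ for the problem of minimizing $[U_r^{(d)}]_k^{\mathrm T}S_{r,k}[U_r^{(d)}]_k$ subject to $(U_r^{(d)})^{\mathrm T}U_r^{(d)}=I_n$.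
   Context: A system tuple $(A,C)$ has $A\in\mathbb{R}^{n\times n}$ strictly stable and $C\in\mathbb{R}^{m\times n}$ with $C^{\mathrm T}C=I_n$. For symmetric $A$ a canonical tuple is $(\Lambda,U)$ with $\Lambda=P^{\mathrm T}AP$ diagonal, $U=CP$, $P$ orthogonal. Data systems $X_1,\dots,X_N$ have canonical tuples $(\Lambda_i^{(x)},U_i^{(x)})$; dictionary atoms $D_1,\dots,D_J$ have canonical tuples $(\Lambda_j^{(d)},U_j^{(d)})$; $z_{j,i}$ are real codes. Notation: $[X]_k$ is the $k$-th column of $X$, or the $k$-th diagonal entry if $X$ is diagonal. For $\lambda$ and diagonal $\Lambda$ with entries $\lambda_1,\dots,\lambda_n$, $E(\lambda,\Lambda)=\mathrm{diag}\Big(\frac{(1-|\lambda|^2)(1-|\lambda_l|^2)}{|1-\lambda\lambda_l^{*}|^2}\Big)_{l=1}^n$. Set $F_{r,j,k}=U_j^{(d)}E([\Lambda_r^{(d)}]_k,\Lambda_j^{(d)})(U_j^{(d)})^{\mathrm T}$, $F'_{r,i,k}=U_i^{(x)}E([\Lambda_r^{(d)}]_k,\Lambda_i^{(x)})(U_i^{(x)})^{\mathrm T}$, and $S_{r,k}=\sum_{i=1}^N z_{r,i}\big(\sum_{j\ne r}z_{j,i}F_{r,j,k}-F'_{r,i,k}\big)$ (an $m\times m$ real matrix). *)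

theory Defs
  imports "HOL-Analysis.Analysis"
begin

text \<open>Strict (discrete-time) stability: every complex eigenvalue of the real matrix A
  has modulus strictly less than one.\<close>
definition strictly_stable :: "real^'n^'n \<Rightarrow> bool" where
  "strictly_stable A \<longleftrightarrow>
     (\<forall>(v::complex^'n) (l::complex). v \<noteq> 0 \<and>
        (\<chi> i j. complex_of_real (A$i$j)) *v v = (\<chi> i. l * v$i) \<longrightarrow> cmod l < 1)"

definition is_diagonal :: "real^'n^'n \<Rightarrow> bool" where
  "is_diagonal L \<longleftrightarrow> (\<forall>i j. i \<noteq> j \<longrightarrow> L$i$j = 0)"

text \<open>(L, U) is the canonical tuple of a system tuple (A, C) with symmetric,
  strictly stable A and C^T C = I, i.e. L = P^T A P diagonal, U = C P, P orthogonal.\<close>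
definition canonical_tuple :: "real^'n^'n \<Rightarrow> real^'n^'m \<Rightarrow> bool" where
  "canonical_tuple L U \<longleftrightarrow>
     (\<exists>(A::real^'n^'n) (C::real^'n^'m) (P::real^'n^'n).
        transpose A = A \<and> strictly_stable A \<and> transpose C ** C = mat 1 \<and>
        orthogonal_matrix P \<and> L = transpose P ** A ** P \<and> is_diagonal L \<and> U = C ** P)"

text \<open>E(lambda, Lambda) for real lambda and real diagonal Lambda.\<close>
definition Emat :: "real \<Rightarrow> real^'n^'n \<Rightarrow> real^'n^'n" where
  "Emat lam L = (\<chi> i j. if i = j then
      ((1 - \<bar>lam\<bar>^2) * (1 - \<bar>L$i$i\<bar>^2)) / \<bar>1 - lam * L$i$i\<bar>^2 else 0)"

text \<open>F_{r,j,k} = U_j E([Lambda_r]_k, Lambda_j) U_j^T  (same shape for F').\<close>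
definition Fmat :: "real^'n^'n \<Rightarrow> 'n \<Rightarrow> real^'n^'n \<Rightarrow> real^'n^'m \<Rightarrow> real^'m^'m" where
  "Fmat Lr k L U = U ** Emat (Lr$k$k) L ** transpose U"

text \<open>S_{r,k} = sum_i z_{r,i} (sum_{j \<noteq> r} z_{j,i} F_{r,j,k} - F'_{r,i,k}),
  atoms indexed by 1..J, data by 1..N, codes z j i.\<close>
definition Smat ::
  "nat \<Rightarrow> nat \<Rightarrow> (nat \<Rightarrow> real^'n^'n) \<Rightarrow> (nat \<Rightarrow> real^'n^'m) \<Rightarrow>
   (nat \<Rightarrow> real^'n^'n) \<Rightarrow> (nat \<Rightarrow> real^'n^'m) \<Rightarrow> (nat \<Rightarrow> nat \<Rightarrow> real) \<Rightarrow>
   nat \<Rightarrow> 'n \<Rightarrow> real^'m^'m" where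
  "Smat N J Ld Ud Lx Ux z r k =
     (\<Sum>i\<in>{1..N}. z r i *\<^sub>R
        ((\<Sum>j\<in>{1..J} - {r}. z j i *\<^sub>R Fmat (Ld r) k (Ld j) (Ud j))
          - Fmat (Ld r) k (Lx i) (Ux i)))"

text \<open>Replace the k-th column of U by x.\<close>
definition replace_col :: "real^'n^'m \<Rightarrow> 'n \<Rightarrow> real^'m \<Rightarrow> real^'n^'m" where
  "replace_col U k x = (\<chi> i l. if l = k then x$i else U$i$l)"

end

theory Submission
  imports Defs
begin

lemma inner_mv: "inner (x::real^'n) (A *v y) = inner (transpose A *v x) y"
  by (metis dot_lmul_matrix transpose_matrix_vector transpose_transpose)

lemma transpose_sum: "transpose (sum (f::'i \<Rightarrow> real^'a^'b) A) = sum (\<lambda>i. transpose (f i)) A"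
  by (simp add: vec_eq_iff transpose_def sum_component)

lemma transpose_diff: "transpose ((A::real^'a^'b) - B) = transpose A - transpose B"
  by (simp add: vec_eq_iff transpose_def)

lemma Fmat_sym: "transpose (Fmat Lr k L U) = Fmat Lr k L U"
proof -
  have E: "transpose (Emat (Lr$k$k) L) = Emat (Lr$k$k) L"
    by (simp add: vec_eq_iff transpose_def Emat_def)
  show ?thesis
    by (simp add: Fmat_def matrix_transpose_mul matrix_mul_assoc E)
qed

lemma Smat_sym: "transpose (Smat N J Ld Ud Lx Ux z r k) = Smat N J Ld Ud Lx Ux z r k"
  by (simp add: Smat_def transpose_sum transpose_scalar transpose_diff Fmat_sym)

lemma quad_nonneg_lin:
  fixes b c :: real
  assumes "\<And>t. 0 \<le> 2*t*b + t^2*c" shows "b = 0"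
proof (rule ccontr)
  assume nb: "b \<noteq> 0"
  have c: "0 \<le> c" using assms[of 1] assms[of "-1"] by simp
  define sc where "sc = 1 / (c+1)"
  define t where "t = - b * sc"
  have sc: "0 < sc" "sc * c < 1" using c by (auto simp: sc_def field_simps)
  have "2*t*b + t^2*c = b^2 * (sc * (sc * c - 2))"
    by (simp add: t_def power2_eq_square algebra_simps)
  also have "\<dots> < 0" using nb sc
    by (intro mult_pos_neg mult_pos_neg) auto
  finally show False using assms[of t] by simp
qed

lemma rayleigh:
  fixes M :: "real^'p^'p"
  assumes sym: "transpose M = M"
    and mu_min: "\<And>v nu. v \<noteq> 0 \<Longrightarrow> M *v v = nu *\<^sub>R v \<Longrightarrow> mu \<le> nu"
    and v: "norm v = 1"
  shows "mu \<le> v \<bullet> (M *v v)"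
proof -
  let ?Q = "\<lambda>x. x \<bullet> (M *v x)"
  have cont: "continuous_on (sphere 0 1) ?Q"
    by (intro continuous_intros linear_continuous_on matrix_vector_mult_linear_continuous_on)
  obtain v0 where v0: "v0 \<in> sphere 0 1" "\<forall>y\<in>sphere 0 1. ?Q v0 \<le> ?Q y"
    using continuous_attains_inf[OF compact_sphere _ cont] v by force
  define m where "m = ?Q v0"
  have Qge: "m * (x \<bullet> x) \<le> ?Q x" for x
  proof (cases "x = 0")
    case True then show ?thesis by simp
  next
    case False
    define y where "y = x /\<^sub>R norm x"
    have "y \<in> sphere 0 1" using False by (simp add: y_def)
    then have "m \<le> ?Q y" using v0 m_def by auto
    moreover have "?Q x = (norm x)^2 * ?Q y"
      using False by (simp add: y_def matrix_vector_mult_scaleR power2_eq_square field_simps)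
    moreover have "x \<bullet> x = (norm x)^2" by (simp add: power2_norm_eq_inner)
    ultimately show ?thesis by (simp add: mult.commute mult_right_mono)
  qed
  define B where "B x y = x \<bullet> (M *v y) - m * (x \<bullet> y)" for x y
  have Bpsd: "0 \<le> B x x" for x using Qge[of x] by (simp add: B_def)
  have Msym: "x \<bullet> (M *v y) = y \<bullet> (M *v x)" for x y
    by (metis inner_mv inner_commute sym)
  have B0: "B v0 v0 = 0" using v0 by (simp add: B_def m_def norm_eq_1)
  have Bexp: "B (v0 + t *\<^sub>R w) (v0 + t *\<^sub>R w) = 2*t*B v0 w + t^2 * B w w" for t w
    using B0 Msym[of v0 w]
    by (simp add: B_def matrix_vector_right_distrib matrix_vector_mult_scaleR inner_add_left
        inner_add_right inner_commute[of w v0] algebra_simps power2_eq_square)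
  have Bz: "B v0 w = 0" for w
    by (rule quad_nonneg_lin[of _ "B w w"]) (metis Bexp Bpsd)
  define w where "w = M *v v0 - m *\<^sub>R v0"
  have "B v0 w = w \<bullet> w"
    using Msym[of v0 w] by (simp add: B_def w_def inner_commute[of "M *v v0" v0] inner_diff_left inner_diff_right algebra_simps)
  then have "w = 0" using Bz by simp
  then have eig: "M *v v0 = m *\<^sub>R v0" by (simp add: w_def)
  have "v0 \<noteq> 0" using v0 by auto
  then have "mu \<le> m" using mu_min eig by blast
  also have "m \<le> ?Q v" using v0 v m_def by auto
  finally show ?thesis .
qed

theorem theorem3:
  fixes N J r :: nat
    and Ld :: "nat \<Rightarrow> real^'n^'n" and Ud :: "nat \<Rightarrow> real^'n^'m"
    and Lx :: "nat \<Rightarrow> real^'n^'n" and Ux :: "nat \<Rightarrow> real^'n^'m"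
    and z :: "nat \<Rightarrow> nat \<Rightarrow> real"
    and k :: 'n
    and W :: "real^'p^'m" and u :: "real^'p" and mu :: real
  assumes data: "\<And>i. i \<in> {1..N} \<Longrightarrow> canonical_tuple (Lx i) (Ux i)"
    and atoms: "\<And>j. j \<in> {1..J} \<Longrightarrow> canonical_tuple (Ld j) (Ud j)"
    and r: "r \<in> {1..J}"
    and dimW: "CARD('p) = CARD('m) - CARD('n) + 1"
    and W_orth: "transpose W ** W = mat 1"
    and W_span: "span (columns W) = {x. \<forall>l. l \<noteq> k \<longrightarrow> column l (Ud r) \<bullet> x = 0}"
    and u_unit: "norm u = 1"
    and u_eig: "(transpose W ** Smat N J Ld Ud Lx Ux z r k ** W) *v u = mu *\<^sub>R u"
    and mu_min: "\<And>v nu. v \<noteq> 0 \<Longrightarrow>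
        (transpose W ** Smat N J Ld Ud Lx Ux z r k ** W) *v v = nu *\<^sub>R v \<Longrightarrow> mu \<le> nu"
  shows "transpose (replace_col (Ud r) k (W *v u)) ** replace_col (Ud r) k (W *v u) = mat 1
    \<and> (\<forall>y. transpose (replace_col (Ud r) k y) ** replace_col (Ud r) k y = mat 1 \<longrightarrow>
          (W *v u) \<bullet> (Smat N J Ld Ud Lx Ux z r k *v (W *v u))
            \<le> y \<bullet> (Smat N J Ld Ud Lx Ux z r k *v y))"
proof -
  define S where "S = Smat N J Ld Ud Lx Ux z r k"
  define M where "M = transpose W ** S ** W"
  define U where "U = Ud r"
  have Ssym: "transpose S = S" by (simp add: S_def Smat_sym)
  have Msym: "transpose M = M"
    by (simp add: M_def matrix_transpose_mul matrix_mul_assoc Ssym)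
  have Uorth: "transpose U ** U = mat 1"
  proof -
    obtain A C P where AC: "transpose C ** C = mat 1" "orthogonal_matrix P" "U = C ** P"
      using atoms[OF r] unfolding canonical_tuple_def U_def by blast
    have "transpose U ** U = transpose P ** ((transpose C ** C) ** P)"
      by (simp add: AC(3) matrix_transpose_mul matrix_mul_assoc)
    also have "\<dots> = transpose P ** P" using AC by (simp add: matrix_mul_lid)
    also have "\<dots> = mat 1" using AC by (simp add: orthogonal_matrix matrix_mul_lid)
    finally show ?thesis .
  qed
  have colU: "column a U \<bullet> column b U = (if a = b then 1 else 0)" for a b
    using Uorth unfolding matrix_mult_transpose_dot_column
    by (simp add: vec_eq_iff mat_def)
  have colR: "column a (replace_col U k x) = (if a = k then x else column a U)" for a x
    by (simp add: vec_eq_iff column_def replace_col_def)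
  have RR: "transpose (replace_col U k x) ** replace_col U k x =
      (\<chi> a b. (if a = k then x else column a U) \<bullet> (if b = k then x else column b U))" for x
    unfolding matrix_mult_transpose_dot_column colR ..
  have quad: "(W *v c) \<bullet> (S *v (W *v c)) = c \<bullet> (M *v c)" for c
    by (simp add: M_def inner_mv[of "W *v c"] matrix_vector_mul_assoc inner_mv[of c]
         matrix_transpose_mul matrix_mul_assoc)
  have normW: "(W *v c) \<bullet> (W *v c) = c \<bullet> c" for c
    using inner_mv[of "W *v c" W c] W_orth
    by (simp add: matrix_vector_mul_assoc inner_commute)
  have inW: "W *v c \<in> {x. \<forall>l. l \<noteq> k \<longrightarrow> column l U \<bullet> x = 0}" for c
    using matrix_vector_mult_in_columnspace[of W c] W_span by (simp add: U_def)
  have part1: "transpose (replace_col U k (W *v u)) ** replace_col U k (W *v u) = mat 1"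
  proof -
    have uu: "u \<bullet> u = 1" using u_unit by (simp add: norm_eq_1)
    show ?thesis unfolding RR
      using inW[of u] colU normW[of u] uu
      by (auto simp: vec_eq_iff mat_def inner_commute)
  qed
  have part2: "(W *v u) \<bullet> (S *v (W *v u)) \<le> y \<bullet> (S *v y)"
    if hy: "transpose (replace_col U k y) ** replace_col U k y = mat 1" for y
  proof -
    have e: "(if a = k then y else column a U) \<bullet> (if b = k then y else column b U)
        = (if a = b then 1 else 0)" for a b
      using arg_cong[OF hy, of "\<lambda>X. X$a$b"] unfolding RR by (simp add: mat_def)
    have yy: "y \<bullet> y = 1" using e[of k k] by simp
    have "y \<in> span (columns W)" unfolding W_span U_def[symmetric]
      using e by (auto simp: inner_commute) (metis (full_types) )
    moreover have "span (columns W) \<subseteq> range ((*v) W)"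
    proof (rule span_minimal)
      show "columns W \<subseteq> range ((*v) W)"
        by (auto simp: columns_def simp flip: matrix_vector_mult_basis)
      show "subspace (range ((*v) W))"
        by (intro linear_subspace_image subspace_UNIV matrix_vector_mul_linear)
    qed
    ultimately obtain c where c: "y = W *v c" by blast
    have cn: "norm c = 1" using yy normW[of c] c by (simp add: norm_eq_1)
    have "(W *v u) \<bullet> (S *v (W *v u)) = mu"
      using quad[of u] u_eig u_unit by (simp add: M_def S_def norm_eq_1)
    also have "mu \<le> c \<bullet> (M *v c)"
      by (rule rayleigh[OF Msym _ cn]) (use mu_min in \<open>auto simp: M_def S_def\<close>)
    also have "\<dots> = y \<bullet> (S *v y)" using quad[of c] c by simp
    finally show ?thesis .
  qed
  show ?thesis using part1 part2 by (simp add: S_def U_def)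
qed

end
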